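(* Let $A$ be a finite skew brace such that $\Lambda(A)$ consists of exactly two vertices which are not adjacent. Then $A$ is isomorphic to the almost trivial skew brace on the symmetric group $S_3$, i.e. the skew brace $(S_3,+,\circ)$ with $g\circ h=gh$ and $g+h=hg$.
   Context: A skew brace is a triple $(A,+,\circ)$ where $(A,+)$ and $(A,\circ)$ are groups with $a\circ(b+c)=a\circ b-a+a\circ c$. $\lambda_a(b)=-a+a\circ b$ defines an action of $(A,\circ)$ on $(A,+)$ by automorphisms. $\Lambda(A)$ is the graph whose vertices are the $\lambda$-orbits of size $>1$, two distinct vertices $L_1,L_2$ adjacent iff $\gcd(|L_1|,|L_2|)\ne1$. *)

theory Defs
  imports "HOL-Algebra.Sym_Groups"
begin

text \<open>A skew brace is given by two group structures on the same carrier: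
  G is the additive group (A,+), written multiplicatively in HOL-Algebra,
  and H is the multiplicative group (A,\<circ>).\<close>

definition skew_brace :: "'a monoid \<Rightarrow> 'a monoid \<Rightarrow> bool" where
  "skew_brace G H \<longleftrightarrow> group G \<and> group H \<and> carrier H = carrier G \<and>
     (\<forall>a\<in>carrier G. \<forall>b\<in>carrier G. \<forall>c\<in>carrier G.
        a \<otimes>\<^bsub>H\<^esub> (b \<otimes>\<^bsub>G\<^esub> c) =
        ((a \<otimes>\<^bsub>H\<^esub> b) \<otimes>\<^bsub>G\<^esub> inv\<^bsub>G\<^esub> a) \<otimes>\<^bsub>G\<^esub> (a \<otimes>\<^bsub>H\<^esub> c))"

definition brace_lambda :: "'a monoid \<Rightarrow> 'a monoid \<Rightarrow> 'a \<Rightarrow> 'a \<Rightarrow> 'a" where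
  "brace_lambda G H a b = inv\<^bsub>G\<^esub> a \<otimes>\<^bsub>G\<^esub> (a \<otimes>\<^bsub>H\<^esub> b)"

definition lambda_orbit :: "'a monoid \<Rightarrow> 'a monoid \<Rightarrow> 'a \<Rightarrow> 'a set" where
  "lambda_orbit G H b = {brace_lambda G H a b | a. a \<in> carrier H}"

definition lambda_orbits :: "'a monoid \<Rightarrow> 'a monoid \<Rightarrow> 'a set set" where
  "lambda_orbits G H = lambda_orbit G H ` carrier G"

definition Lambda_vertices :: "'a monoid \<Rightarrow> 'a monoid \<Rightarrow> 'a set set" where
  "Lambda_vertices G H = {L \<in> lambda_orbits G H. card L > 1}"

definition Lambda_adj :: "'a set \<Rightarrow> 'a set \<Rightarrow> bool" where
  "Lambda_adj L1 L2 \<longleftrightarrow> L1 \<noteq> L2 \<and> gcd (card L1) (card L2) \<noteq> 1"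

definition skew_brace_iso ::
  "'a monoid \<Rightarrow> 'a monoid \<Rightarrow> 'b monoid \<Rightarrow> 'b monoid \<Rightarrow> ('a \<Rightarrow> 'b) \<Rightarrow> bool" where
  "skew_brace_iso G H G' H' f \<longleftrightarrow> bij_betw f (carrier G) (carrier G') \<and>
     (\<forall>a\<in>carrier G. \<forall>b\<in>carrier G.
        f (a \<otimes>\<^bsub>G\<^esub> b) = f a \<otimes>\<^bsub>G'\<^esub> f b \<and> f (a \<otimes>\<^bsub>H\<^esub> b) = f a \<otimes>\<^bsub>H'\<^esub> f b)"

text \<open>The almost trivial skew brace on S_3: g \<circ> h = gh, g + h = hg,
  where gh is the product in sym_group 3 (composition).\<close>
definition S3_circ :: "(nat \<Rightarrow> nat) monoid" where
  "S3_circ = sym_group 3"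

definition S3_add :: "(nat \<Rightarrow> nat) monoid" where
  "S3_add = \<lparr> carrier = carrier (sym_group 3),
              mult = (\<lambda>g h. h \<otimes>\<^bsub>sym_group 3\<^esub> g),
              one = \<one>\<^bsub>sym_group 3\<^esub> \<rparr>"

end

theory Submission
  imports Defs "HOL-Algebra.Group_Action" "HOL-Computational_Algebra.Primes"
begin

lemma arith6:
  fixes n f m1 m2 :: nat
  assumes n: "n = f + m1 + m2" and f1: "f \<ge> 1" and m1: "m1 > 1" and m2: "m2 > 1"
    and cop: "coprime m1 m2" and fd: "f dvd n" and d1: "m1 dvd n" and d2: "m2 dvd n"
  shows "n = 6 \<and> f = 1 \<and> ((m1 = 2 \<and> m2 = 3) \<or> (m1 = 3 \<and> m2 = 2))"
proof -
  have "m1*m2 dvd n" using cop d1 d2 by (simp add: divides_mult)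
  then obtain k where k: "n = m1*m2*k" by blast
  obtain j where j: "n = f*j" using fd by blast
  have "j \<noteq> 0" using j n m1 by (metis add_gr_0 less_numeral_extra(3) mult_0_right zero_less_one order.strict_trans)
  moreover have "j \<noteq> 1" using j n m1 m2 by auto
  ultimately have "j \<ge> 2" by auto
  hence "f*2 \<le> n" using j by (metis mult_le_mono2)
  hence nb: "n \<le> (2*m1+2*m2)" using n by simp
  have "n > 0" using n m1 by simp
  hence "k \<noteq> 0" using k by (metis mult_0_right less_irrefl)
  hence "m1*m2 \<le> n" using k by simp
  hence mm: "m1*m2 \<le> (2*m1+2*m2)" using nb by linarith
  have b1: "m1 \<le> 6" "m2 \<le> 6"
  proof -
    have c2: "m2 \<le> 6" if "m1 = 2" and "m2 > 1" and "coprime m1 m2" and "f dvd n" "n = f + m1 + m2"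
      and "n = m1*m2*k" "n \<le> (2*m1+2*m2)" "k \<noteq> 0" for m1 m2 :: nat
    proof -
      have "m2 \<noteq> 2" using that by auto
      hence m23: "m2 \<ge> 3" using that by auto
      have "k = 1"
      proof (rule ccontr)
        assume "k \<noteq> 1" hence "k \<ge> 2" using that by auto
        hence "m1*m2*k \<ge> m1*m2*2" by simp
        moreover have "m1*m2*2 = 4*m2" using that(1) by simp
        ultimately have "4*m2 \<le> n" using that(6) by metis
        thus False using that(1,7) m23 by simp
      qed
      hence "f = m2 - 2" using that by simp
      have "f dvd n - 2*f" by (rule dvd_diff_nat[OF that(4)]) simp
      moreover have "n = 2*m2" using that(1,6) \<open>k = 1\<close> by simp
      hence "n - 2*f = 4" using \<open>f = m2 - 2\<close> m23 by linarith
      ultimately have "f dvd 4" by metis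
      hence "f \<le> 4" by (simp add: dvd_imp_le)
      thus ?thesis using \<open>f = m2 - 2\<close> by linarith
    qed
    have c3: "m1 \<le> 6" if "m1 \<ge> 3" "m2 \<ge> 3" "m1*m2 \<le> (2*m1+2*m2)" for m1 m2 :: nat
    proof (rule ccontr)
      assume "\<not> m1 \<le> 6"
      hence "m1*m2 \<ge> 7*m2" by simp
      moreover have "m1*m2 \<ge> 3*m1" using that by simp
      moreover have "\<And>P::nat. 7*m2 \<le> P \<Longrightarrow> 3*m1 \<le> P \<Longrightarrow> P \<le> (2*m1+2*m2) \<Longrightarrow> False" using that by linarith
      ultimately show False using that by blast
    qed
    show "m1 \<le> 6"
    proof (cases "m1 = 2")
      case False
      show ?thesis
      proof (cases "m2 = 2")
        case True
        have "coprime m2 m1" using cop by (simp add: coprime_commute)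
        moreover have "n = f + m2 + m1" "n = m2*m1*k" "n \<le> (2*m2+2*m1)" using n k nb by (auto simp: mult.commute)
        ultimately show ?thesis using c2[of m2 m1] True m1 \<open>k\<noteq>0\<close> fd by blast
      next
        case False thus ?thesis using c3[of m1 m2] \<open>m1 \<noteq> 2\<close> m1 m2 mm by linarith
      qed
    qed simp
    show "m2 \<le> 6"
    proof (cases "m2 = 2")
      case False
      show ?thesis
      proof (cases "m1 = 2")
        case True thus ?thesis using c2[of m1 m2] n m2 k nb \<open>k\<noteq>0\<close> cop fd by blast
      next
        case False
        have "m2*m1 \<le> 2*m2+2*m1" using mm by (simp add: mult.commute)
        thus ?thesis using c3[of m2 m1] False \<open>m2 \<noteq> 2\<close> m1 m2 by linarith
      qed
    qed simp
  qed
  have "k \<le> 4"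
  proof (rule ccontr)
    assume "\<not> k \<le> 4"
    hence "n \<ge> 5*(m1*m2)" using k by simp
    moreover have "m1*m2 \<ge> 2*m2" using m1 by simp
    moreover have "m1*m2 \<ge> 2*m1" using m2 by simp
    moreover have "\<And>P::nat. 5*P \<le> n \<Longrightarrow> 2*m2 \<le> P \<Longrightarrow> 2*m1 \<le> P \<Longrightarrow> False" using nb m2 by linarith
    ultimately show False by blast
  qed
  hence "m1 \<in> {2,3,4,5,6}" "m2 \<in> {2,3,4,5,6}" "k \<in> {1,2,3,4}" using b1 m1 m2 \<open>k \<noteq> 0\<close> by auto
  moreover have "\<forall>a\<in>{2,3,4,5,6::nat}. \<forall>b\<in>{2,3,4,5,6::nat}. \<forall>c\<in>{1,2,3,4::nat}.
     gcd a b = 1 \<longrightarrow> a*b*c \<le> 2*a+2*b \<longrightarrow> a+b < a*b*c \<longrightarrow> (a*b*c - a - b) dvd (a*b*c) \<longrightarrow>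
     a*b*c = 6 \<and> a*b*c - a - b = 1 \<and> ((a = 2 \<and> b = 3) \<or> (a = 3 \<and> b = 2))"
    by code_simp
  moreover have "f = m1*m2*k - m1 - m2" "m1+m2 < m1*m2*k" using n k f1 by auto
  ultimately show ?thesis using n k nb cop fd
    by (metis coprime_iff_gcd_eq_1)
qed



locale SB = G: group G + H: group H for G H :: "'a monoid" +
  assumes carr: "carrier H = carrier G"
  and dist: "\<And>a b c. a \<in> carrier G \<Longrightarrow> b \<in> carrier G \<Longrightarrow> c \<in> carrier G \<Longrightarrow>
        a \<otimes>\<^bsub>H\<^esub> (b \<otimes>\<^bsub>G\<^esub> c) =
        ((a \<otimes>\<^bsub>H\<^esub> b) \<otimes>\<^bsub>G\<^esub> inv\<^bsub>G\<^esub> a) \<otimes>\<^bsub>G\<^esub> (a \<otimes>\<^bsub>H\<^esub> c)"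
begin

abbreviation "pl x y \<equiv> x \<otimes>\<^bsub>G\<^esub> y"
abbreviation "ci x y \<equiv> x \<otimes>\<^bsub>H\<^esub> y"
abbreviation "ng x \<equiv> inv\<^bsub>G\<^esub> x"
abbreviation "z \<equiv> \<one>\<^bsub>G\<^esub>"
abbreviation "A \<equiv> carrier G"
abbreviation "lm \<equiv> brace_lambda G H"

lemma ci_closed[simp]: "a \<in> A \<Longrightarrow> b \<in> A \<Longrightarrow> ci a b \<in> A"
  using H.m_closed carr by auto

lemma one_eq: "\<one>\<^bsub>H\<^esub> = z"
proof -
  have o: "\<one>\<^bsub>H\<^esub> \<in> A" using H.one_closed carr by auto
  have "ci \<one>\<^bsub>H\<^esub> (pl z z) = pl (pl (ci \<one>\<^bsub>H\<^esub> z) (ng \<one>\<^bsub>H\<^esub>)) (ci \<one>\<^bsub>H\<^esub> z)"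
    using dist[OF o G.one_closed G.one_closed] by simp
  hence "z = pl z (ng \<one>\<^bsub>H\<^esub>)" using o carr by simp
  hence "ng \<one>\<^bsub>H\<^esub> = z" using o by simp
  thus ?thesis using o by (metis G.inv_eq_1_iff)
qed

lemma ci_zero_left[simp]: "b \<in> A \<Longrightarrow> ci z b = b"
  using one_eq carr H.l_one by metis
lemma ci_zero_right[simp]: "b \<in> A \<Longrightarrow> ci b z = b"
  using one_eq carr H.r_one by metis

lemma lm_closed[simp]: "a \<in> A \<Longrightarrow> b \<in> A \<Longrightarrow> lm a b \<in> A"
  by (simp add: brace_lambda_def)

lemma ci_eq: "a \<in> A \<Longrightarrow> b \<in> A \<Longrightarrow> ci a b = pl a (lm a b)"
  by (simp add: brace_lambda_def G.m_assoc[symmetric])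

lemma lm_hom: "a \<in> A \<Longrightarrow> b \<in> A \<Longrightarrow> c \<in> A \<Longrightarrow> lm a (pl b c) = pl (lm a b) (lm a c)"
  by (simp add: brace_lambda_def dist G.m_assoc)

lemma lm_zero[simp]: "a \<in> A \<Longrightarrow> lm a z = z"
  by (simp add: brace_lambda_def)

lemma lm_zero_left[simp]: "b \<in> A \<Longrightarrow> lm z b = b"
  by (simp add: brace_lambda_def)

lemma lm_ng: "a \<in> A \<Longrightarrow> b \<in> A \<Longrightarrow> lm a (ng b) = ng (lm a b)"
proof -
  assume a: "a \<in> A" "b \<in> A"
  have "pl (lm a b) (lm a (ng b)) = z" using lm_hom[OF a(1) a(2), of "ng b"] a by simp
  hence "pl (lm a (ng b)) (lm a b) = z" using a by (simp add: G.inv_comm)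
  thus ?thesis using a by (simp add: G.inv_equality)
qed

lemma lm_comp: "a \<in> A \<Longrightarrow> b \<in> A \<Longrightarrow> x \<in> A \<Longrightarrow> lm (ci a b) x = lm a (lm b x)"
proof -
  assume a: "a \<in> A" "b \<in> A" "x \<in> A"
  have "lm a (lm b x) = pl (lm a (ng b)) (lm a (ci b x))"
    using a by (simp add: brace_lambda_def[of G H b] lm_hom)
  also have "\<dots> = pl (ng (lm a b)) (lm a (ci b x))" using a by (simp add: lm_ng)
  also have "\<dots> = lm (ci a b) x"
    using a apply (simp add: brace_lambda_def G.inv_mult_group H.m_assoc[symmetric] carr G.m_assoc[symmetric])
    by (simp add: G.m_assoc)
  finally show ?thesis by simp
qed

lemma Hinv_closed[simp]: "a \<in> A \<Longrightarrow> inv\<^bsub>H\<^esub> a \<in> A"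
  using H.inv_closed carr by auto

lemma lm_inv_left: "a \<in> A \<Longrightarrow> x \<in> A \<Longrightarrow> lm (inv\<^bsub>H\<^esub> a) (lm a x) = x"
proof -
  assume a: "a \<in> A" "x \<in> A"
  have "lm (inv\<^bsub>H\<^esub> a) (lm a x) = lm (ci (inv\<^bsub>H\<^esub> a) a) x" using a by (simp add: lm_comp)
  also have "ci (inv\<^bsub>H\<^esub> a) a = z" using a carr H.l_inv one_eq by metis
  finally show ?thesis using a by simp
qed
lemma lm_inv_right: "a \<in> A \<Longrightarrow> x \<in> A \<Longrightarrow> lm a (lm (inv\<^bsub>H\<^esub> a) x) = x"
proof -
  assume a: "a \<in> A" "x \<in> A"
  have "lm a (lm (inv\<^bsub>H\<^esub> a) x) = lm (ci a (inv\<^bsub>H\<^esub> a)) x" using a by (simp add: lm_comp)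
  also have "ci a (inv\<^bsub>H\<^esub> a) = z" using a carr H.r_inv one_eq by metis
  finally show ?thesis using a by simp
qed
lemma lm_bij: "a \<in> A \<Longrightarrow> bij_betw (lm a) A A"
  by (rule bij_betwI[where g="lm (inv\<^bsub>H\<^esub> a)"]) (auto simp: lm_inv_left lm_inv_right)

lemma lm_inj: "a \<in> A \<Longrightarrow> x \<in> A \<Longrightarrow> y \<in> A \<Longrightarrow> lm a x = lm a y \<Longrightarrow> x = y"
  by (metis lm_inv_left)

definition phi where "phi a = (\<lambda>x\<in>A. lm a x)"

lemma phi_Bij: "a \<in> A \<Longrightarrow> phi a \<in> Bij A"
  unfolding Bij_def phi_def using lm_bij[of a] by simp

lemma action: "group_action H A phi"
proof -
  have "phi \<in> hom H (BijGroup A)"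
  proof (rule homI)
    fix a assume a: "a \<in> carrier H"
    show "phi a \<in> carrier (BijGroup A)"
      using a carr phi_Bij[of a] by (simp add: BijGroup_def)
  next
    fix a b assume a: "a \<in> carrier H" "b \<in> carrier H"
    have B: "phi a \<in> Bij A" "phi b \<in> Bij A" using a carr phi_Bij by auto
    have "phi a \<otimes>\<^bsub>BijGroup A\<^esub> phi b = compose A (phi a) (phi b)"
      using B by (simp add: BijGroup_def)
    also have "\<dots> = phi (a \<otimes>\<^bsub>H\<^esub> b)"
      unfolding compose_def phi_def
      by (rule restrict_ext) (use a carr in \<open>simp add: lm_comp\<close>)
    finally show "phi (a \<otimes>\<^bsub>H\<^esub> b) = phi a \<otimes>\<^bsub>BijGroup A\<^esub> phi b" by simp
  qed
  thus ?thesis unfolding group_action_def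
    by (simp add: group_hom.intro group_BijGroup group_hom_axioms.intro H.group_axioms)
qed

lemma orbit_eq: "x \<in> A \<Longrightarrow> orbit H phi x = lambda_orbit G H x"
  by (auto simp: orbit_def lambda_orbit_def phi_def carr)

lemma stab_eq: "x \<in> A \<Longrightarrow> stabilizer H phi x = {g \<in> A. lm g x = x}"
  by (auto simp: stabilizer_def phi_def carr)

lemma orbit_stab: "x \<in> A \<Longrightarrow> card (lambda_orbit G H x) * card {g \<in> A. lm g x = x} = card A"
  using group_action.orbit_stabilizer_theorem[OF action, of x] orbit_eq stab_eq
  by (simp add: order_def carr)

lemma orbit_def2: "lambda_orbit G H x = (\<lambda>g. lm g x) ` A"
  by (auto simp: lambda_orbit_def carr)

lemma orbit_self: "x \<in> A \<Longrightarrow> x \<in> lambda_orbit G H x"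
  using lm_zero_left[of x] by (auto simp: orbit_def2 intro!: image_eqI[where x=z])

lemma orbit_sub: "x \<in> A \<Longrightarrow> lambda_orbit G H x \<subseteq> A"
  by (auto simp: orbit_def2)

lemma orbit_mem: "x \<in> A \<Longrightarrow> y \<in> lambda_orbit G H x \<Longrightarrow> lambda_orbit G H y = lambda_orbit G H x"
proof -
  assume x: "x \<in> A" and "y \<in> lambda_orbit G H x"
  then obtain g where g: "g \<in> A" "y = lm g x" by (auto simp: orbit_def2)
  show ?thesis
  proof
    show "lambda_orbit G H y \<subseteq> lambda_orbit G H x"
      using g x by (auto simp: orbit_def2 lm_comp[symmetric] intro!: image_eqI)
    show "lambda_orbit G H x \<subseteq> lambda_orbit G H y"
    proof
      fix w assume "w \<in> lambda_orbit G H x"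
      then obtain h where h: "h \<in> A" "w = lm h x" by (auto simp: orbit_def2)
      have "w = lm (ci h (inv\<^bsub>H\<^esub> g)) y" using g h x by (simp add: lm_comp lm_inv_left)
      thus "w \<in> lambda_orbit G H y" using g h by (auto simp: orbit_def2)
    qed
  qed
qed

lemma orbit_finite: "finite A \<Longrightarrow> finite (lambda_orbit G H x)"
  by (simp add: orbit_def2)

lemma lm_in_orbit: "x \<in> A \<Longrightarrow> a \<in> A \<Longrightarrow> lm a x \<in> lambda_orbit G H x"
  by (auto simp: orbit_def2)

end



locale SB2 = SB G H for G H :: "'a monoid" +
  fixes L1 L2
  assumes fin: "finite (carrier G)"
    and V: "Lambda_vertices G H = {L1, L2}" and neq: "L1 \<noteq> L2" and nadj: "\<not> Lambda_adj L1 L2"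
begin

abbreviation "orb \<equiv> lambda_orbit G H"

lemma Li_orbit: "L \<in> {L1, L2} \<Longrightarrow> \<exists>y\<in>A. L = orb y \<and> card L > 1"
proof -
  assume "L \<in> {L1, L2}"
  hence "L \<in> Lambda_vertices G H" using V by simp
  hence "L \<in> orb ` A" "card L > 1" by (auto simp: Lambda_vertices_def lambda_orbits_def)
  thus ?thesis by blast
qed

lemma orbit_cases: "x \<in> A \<Longrightarrow> orb x = {x} \<or> orb x = L1 \<or> orb x = L2"
proof -
  assume x: "x \<in> A"
  show ?thesis
  proof (cases "card (orb x) > 1")
    case True
    hence "orb x \<in> Lambda_vertices G H" using x by (auto simp: Lambda_vertices_def lambda_orbits_def)
    thus ?thesis using V by auto
  next
    case False
    have "x \<in> orb x" "finite (orb x)" using x orbit_self orbit_finite fin by auto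
    hence "card (orb x) \<noteq> 0" by auto
    hence "card (orb x) = 1" using False by linarith
    then obtain y where "orb x = {y}" by (rule card_1_singletonE)
    hence "orb x = {x}" using \<open>x \<in> orb x\<close> by simp
    thus ?thesis by simp
  qed
qed

definition "F = {x \<in> A. orb x = {x}}"

lemma F_iff: "x \<in> F \<longleftrightarrow> x \<in> A \<and> (\<forall>a\<in>A. lm a x = x)"
proof
  assume "x \<in> F" thus "x \<in> A \<and> (\<forall>a\<in>A. lm a x = x)"
    unfolding F_def using lm_in_orbit by fastforce
next
  assume x: "x \<in> A \<and> (\<forall>a\<in>A. lm a x = x)"
  hence "orb x = {x}" by (auto simp: orbit_def2)
  thus "x \<in> F" using x F_def by auto
qed

lemma F_sub: "subgroup F G"
proof (rule G.subgroupI)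
  show "F \<subseteq> A" by (auto simp: F_def)
  show "F \<noteq> {}" using F_iff[of z] by auto
  fix a assume a: "a \<in> F"
  thus "ng a \<in> F" by (auto simp: F_iff lm_ng)
  fix b assume b: "b \<in> F"
  thus "pl a b \<in> F" using a by (auto simp: F_iff lm_hom)
qed

lemma L_disj: "L1 \<inter> L2 = {}"
proof (rule ccontr)
  assume "L1 \<inter> L2 \<noteq> {}"
  then obtain w where w: "w \<in> L1" "w \<in> L2" by auto
  obtain y1 where y1: "y1 \<in> A" "L1 = orb y1" using Li_orbit[of L1] by auto
  obtain y2 where y2: "y2 \<in> A" "L2 = orb y2" using Li_orbit[of L2] by auto
  have "L1 = orb w" using orbit_mem y1 w by auto
  moreover have "L2 = orb w" using orbit_mem y2 w by auto
  ultimately show False using neq by simp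
qed

lemma FL_disj: "L \<in> {L1, L2} \<Longrightarrow> F \<inter> L = {}"
proof (rule ccontr)
  assume L: "L \<in> {L1, L2}" and "F \<inter> L \<noteq> {}"
  then obtain w where w: "w \<in> F" "w \<in> L" by auto
  obtain y where y: "y \<in> A" "L = orb y" "card L > 1" using Li_orbit[OF L] by auto
  have "L = orb w" using orbit_mem y w by auto
  also have "\<dots> = {w}" using w F_def by auto
  finally show False using y by simp
qed

lemma A_split: "A = F \<union> L1 \<union> L2"
proof
  show "A \<subseteq> F \<union> L1 \<union> L2"
  proof
    fix x assume x: "x \<in> A"
    thus "x \<in> F \<union> L1 \<union> L2" using orbit_cases[OF x] orbit_self[OF x] F_def by auto
  qed
  show "F \<union> L1 \<union> L2 \<subseteq> A"
    using Li_orbit[of L1] Li_orbit[of L2] orbit_sub F_def by blast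
qed

lemma card6: "card A = 6 \<and> card F = 1 \<and> ((card L1 = 2 \<and> card L2 = 3) \<or> (card L1 = 3 \<and> card L2 = 2))"
proof -
  have fF: "finite F" "finite L1" "finite L2" using A_split fin by (auto intro: finite_subset)
  have n: "card A = card F + card L1 + card L2"
    using A_split L_disj FL_disj fF by (simp add: card_Un_disjoint Int_Un_distrib2)
  have "card (rcosets\<^bsub>G\<^esub> F) * card F = card A" using G.lagrange[OF F_sub] by (simp add: order_def)
  hence fd: "card F dvd card A" by (metis dvd_triv_right)
  have "z \<in> F" using F_iff[of z] by simp
  hence "card F \<noteq> 0" using fF by auto
  hence f1: "card F \<ge> 1" by simp
  have d: "card L dvd card A" if LL: "L \<in> {L1, L2}" for L
  proof -
    obtain y where y: "y \<in> A" "L = orb y" using Li_orbit[OF LL] by auto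
    show ?thesis using orbit_stab[OF y(1)] y(2) by (metis dvd_triv_left)
  qed
  have c1: "card L1 > 1" "card L2 > 1" using Li_orbit[of L1] Li_orbit[of L2] by auto
  have "coprime (card L1) (card L2)" using nadj neq by (simp add: Lambda_adj_def coprime_iff_gcd_eq_1)
  thus ?thesis using arith6[OF n f1 c1 _ fd d d] by auto
qed

end



context SB2
begin

definition "LL = (if card L1 = 3 then L1 else L2)"
definition "CC = (if card L1 = 3 then L2 else L1)"

lemma cardL: "card LL = 3" and cardC: "card CC = 2" and cardA: "card A = 6"
  using card6 by (auto simp: LL_def CC_def)

lemma LC_in: "LL \<in> {L1, L2}" "CC \<in> {L1, L2}" by (auto simp: LL_def CC_def)

lemma F_z: "F = {z}"
proof -
  have "z \<in> F" using F_iff[of z] by simp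
  moreover have "card F = 1" using card6 by simp
  ultimately show ?thesis by (metis card_1_singletonE singletonD)
qed

lemma A_cases: "x \<in> A \<Longrightarrow> x = z \<or> x \<in> LL \<or> x \<in> CC"
  using A_split F_z card6 by (auto simp: LL_def CC_def)

lemma LC_disj: "x \<in> LL \<Longrightarrow> x \<notin> CC"
  using L_disj by (auto simp: LL_def CC_def)

lemma z_notL: "z \<notin> LL" and z_notC: "z \<notin> CC"
  using FL_disj[OF LC_in(1)] FL_disj[OF LC_in(2)] F_z by auto

lemma L_sub: "x \<in> LL \<Longrightarrow> x \<in> A" and C_sub: "x \<in> CC \<Longrightarrow> x \<in> A"
  using A_split LC_in by (auto simp: LL_def CC_def)

lemma L_orb: "x \<in> LL \<Longrightarrow> orb x = LL"
proof -
  assume x: "x \<in> LL"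
  obtain y where "y \<in> A" "LL = orb y" using Li_orbit[OF LC_in(1)] by auto
  thus ?thesis using orbit_mem x by auto
qed

lemma C_orb: "x \<in> CC \<Longrightarrow> orb x = CC"
proof -
  assume x: "x \<in> CC"
  obtain y where "y \<in> A" "CC = orb y" using Li_orbit[OF LC_in(2)] by auto
  thus ?thesis using orbit_mem x by auto
qed

lemma lmL: "x \<in> LL \<Longrightarrow> a \<in> A \<Longrightarrow> lm a x \<in> LL"
  using lm_in_orbit L_orb L_sub by metis

lemma lmC: "x \<in> CC \<Longrightarrow> a \<in> A \<Longrightarrow> lm a x \<in> CC"
  using lm_in_orbit C_orb C_sub by metis

lemma fixed_z: "x \<in> A \<Longrightarrow> (\<And>a. a \<in> A \<Longrightarrow> lm a x = x) \<Longrightarrow> x = z"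
  using F_iff F_z by auto

lemma orb_z: "orb z = {z}" using F_z F_def by auto

lemma orb_card3: "x \<in> A \<Longrightarrow> card (orb x) = 3 \<Longrightarrow> x \<in> LL"
  using A_cases[of x] C_orb cardC orb_z by fastforce

lemma orb_card2: "x \<in> A \<Longrightarrow> card (orb x) = 2 \<Longrightarrow> x \<in> CC"
  using A_cases[of x] L_orb cardL orb_z by fastforce

lemma stabL: "x \<in> LL \<Longrightarrow> card {g \<in> A. lm g x = x} = 2"
  using orbit_stab[of x] L_orb[of x] cardL cardA L_sub by simp

lemma stabC: "x \<in> CC \<Longrightarrow> card {g \<in> A. lm g x = x} = 3"
  using orbit_stab[of x] C_orb[of x] cardC cardA C_sub by simp

lemma orb_ng: "x \<in> A \<Longrightarrow> orb (ng x) = ng ` orb x"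
  by (auto simp: orbit_def2 lm_ng image_image)

lemma card_ng: "S \<subseteq> A \<Longrightarrow> card (ng ` S) = card S"
  by (rule card_image) (meson G.inv_inj inj_on_subset)

lemma LsubA: "LL \<subseteq> A" and CsubA: "CC \<subseteq> A" using L_sub C_sub by auto

lemma ngL: "x \<in> LL \<Longrightarrow> ng x \<in> LL"
  using orb_card3[of "ng x"] orb_ng[of x] card_ng[of "orb x"] L_orb[of x] cardL L_sub LsubA by simp

lemma ngC: "x \<in> CC \<Longrightarrow> ng x \<in> CC"
  using orb_card2[of "ng x"] orb_ng[of x] card_ng[of "orb x"] C_orb[of x] cardC C_sub CsubA by simp

lemma L_inv: "t \<in> LL \<Longrightarrow> pl t t = z"
proof -
  assume t: "t \<in> LL"
  obtain p q r where pqr: "LL = {p,q,r}" "p \<noteq> q" "q \<noteq> r" "p \<noteq> r"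
    using cardL by (auto simp: card_3_iff)
  have nn: "\<And>x. x \<in> LL \<Longrightarrow> ng (ng x) = x" using L_sub by simp
  have "\<exists>t0\<in>LL. ng t0 = t0"
  proof (rule ccontr)
    assume no: "\<not> (\<exists>t0\<in>LL. ng t0 = t0)"
    have "ng p \<in> {q, r}" using ngL[of p] pqr no by auto
    moreover have "ng q \<in> {p, r}" using ngL[of q] pqr no by auto
    moreover have "ng r \<in> {p, q}" using ngL[of r] pqr no by auto
    ultimately have h: "ng p \<in> {q, r}" "ng q \<in> {p, r}" "ng r \<in> {p, q}" by auto
    have np: "ng (ng p) = p" "ng (ng q) = q" "ng (ng r) = r" using nn pqr by auto
    show False
    proof (cases "ng p = q")
      case True
      hence nq: "ng q = p" using np(1) by simp
      show False
      proof (cases "ng r = p")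
        case True thus False using np(3) \<open>ng p = q\<close> pqr by simp
      next
        case False hence "ng r = q" using h(3) by simp
        thus False using np(3) nq pqr by simp
      qed
    next
      case False
      hence "ng p = r" using h(1) by simp
      hence nr: "ng r = p" using np(1) by simp
      show False
      proof (cases "ng q = p")
        case True thus False using np(2) \<open>ng p = r\<close> pqr by simp
      next
        case False hence "ng q = r" using h(2) by simp
        thus False using np(2) nr pqr by simp
      qed
    qed
  qed
  then obtain t0 where t0: "t0 \<in> LL" "ng t0 = t0" by auto
  have "pl t0 t0 = z" using t0 L_sub[of t0] G.r_inv[of t0] by simp
  obtain a where a: "a \<in> A" "t = lm a t0" using t L_orb[OF t0(1)] by (auto simp: orbit_def2)
  have "pl t t = lm a (pl t0 t0)" using a L_sub[OF t0(1)] by (simp add: lm_hom)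
  thus ?thesis using \<open>pl t0 t0 = z\<close> a by simp
qed

lemma L_ng: "t \<in> LL \<Longrightarrow> ng t = t"
  using L_inv[of t] L_sub[of t] by (metis G.inv_equality)

lemma ng_eq_iff: "x \<in> A \<Longrightarrow> y \<in> A \<Longrightarrow> pl x y = z \<Longrightarrow> ng y = x"
  by (rule G.inv_equality) auto

lemma C_nonpair: "c \<in> CC \<Longrightarrow> pl c c \<noteq> z"
proof
  assume c0: "c \<in> CC" and cz: "pl c c = z"
  have allz: "pl d d = z" if d: "d \<in> CC" for d
  proof -
    obtain a where a: "a \<in> A" "d = lm a c" using d C_orb[OF c0] by (auto simp: orbit_def2)
    have "pl d d = lm a (pl c c)" using a C_sub[OF c0] by (simp add: lm_hom)
    thus ?thesis using cz a by simp
  qed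
  have ngd: "ng d = d" if "d \<in> CC" for d using allz[OF that] ng_eq_iff C_sub that by blast
  obtain c1 c2 where cc: "CC = {c1, c2}" "c1 \<noteq> c2" using cardC by (auto simp: card_2_iff)
  have c12: "c1 \<in> A" "c2 \<in> A" "c1 \<in> CC" "c2 \<in> CC" using cc C_sub by auto
  define s where "s = pl c1 c2"
  have sA: "s \<in> A" using c12 s_def by simp
  have "s \<noteq> z"
  proof
    assume "s = z" hence "ng c2 = c1" using ng_eq_iff[OF c12(1) c12(2)] s_def by simp
    thus False using ngd[of c2] c12 cc by simp
  qed
  moreover have "s \<noteq> c1"
  proof
    assume "s = c1" hence "c2 = z" using c12 s_def by simp
    thus False using z_notC c12 by simp
  qed
  moreover have "s \<noteq> c2"
  proof
    assume "s = c2" hence "c1 = z" using c12 s_def by simp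
    thus False using z_notC c12 by simp
  qed
  ultimately have "s \<in> LL" using A_cases[OF sA] cc by auto
  hence "ng s = s" by (rule L_ng)
  hence sc: "pl c2 c1 = s" using s_def c12 ngd by (simp add: G.inv_mult_group)
  have "\<And>a. a \<in> A \<Longrightarrow> lm a s = s"
  proof -
    fix a assume a: "a \<in> A"
    have l: "lm a c1 \<in> CC" "lm a c2 \<in> CC" using lmC c12 a by auto
    have "lm a c1 \<noteq> lm a c2" using lm_inj[OF a] c12 cc by blast
    hence "(lm a c1 = c1 \<and> lm a c2 = c2) \<or> (lm a c1 = c2 \<and> lm a c2 = c1)" using l cc by auto
    moreover have "lm a s = pl (lm a c1) (lm a c2)" using a c12 s_def by (simp add: lm_hom)
    ultimately show "lm a s = s" using sc s_def by auto
  qed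
  hence "s = z" using fixed_z sA by blast
  thus False using \<open>s \<noteq> z\<close> by simp
qed

lemma C_ng: "c \<in> CC \<Longrightarrow> ng c \<noteq> c"
proof
  assume c: "c \<in> CC" and e: "ng c = c"
  have "pl c c = pl c (ng c)" using e by simp
  also have "\<dots> = z" using C_sub[OF c] by simp
  finally show False using C_nonpair[OF c] by simp
qed

lemma C_eq: "c \<in> CC \<Longrightarrow> CC = {c, ng c}"
proof -
  assume c: "c \<in> CC"
  obtain c1 c2 where cc: "CC = {c1, c2}" "c1 \<noteq> c2" using cardC by (auto simp: card_2_iff)
  thus ?thesis using c ngC[OF c] C_ng[OF c] by auto
qed

lemma orb_double: "x \<in> A \<Longrightarrow> orb (pl x x) = (\<lambda>y. pl y y) ` orb x"
  by (auto simp: orbit_def2 lm_hom image_image)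

lemma C_double: "c \<in> CC \<Longrightarrow> pl c c = ng c"
proof -
  assume c: "c \<in> CC"
  have cA: "c \<in> A" using C_sub c by simp
  have "pl c c \<notin> LL"
  proof
    assume "pl c c \<in> LL"
    hence "card (orb (pl c c)) = 3" using L_orb cardL by simp
    moreover have "card (orb (pl c c)) \<le> 2"
      using orb_double[OF cA] C_orb[OF c] cardC card_image_le[of CC "\<lambda>y. pl y y"] finite_subset[OF CsubA fin]
      by simp
    ultimately show False by simp
  qed
  moreover have "pl c c \<noteq> z" using C_nonpair c by simp
  ultimately have "pl c c \<in> CC" using A_cases[of "pl c c"] cA by auto
  moreover have "pl c c \<noteq> c"
  proof
    assume "pl c c = c" hence "c = z" using cA by simp
    thus False using z_notC c by simp
  qed
  ultimately show ?thesis using C_eq[OF c] by auto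
qed

lemma ngng_C: "c \<in> CC \<Longrightarrow> pl (ng c) (ng c) = c"
proof -
  assume c: "c \<in> CC"
  have cA: "c \<in> A" using C_sub c by simp
  have "pl (ng c) (ng c) = ng (pl c c)" using cA by (simp add: G.inv_mult_group)
  also have "\<dots> = c" using C_double[OF c] cA by simp
  finally show ?thesis .
qed

lemma sum_LC: "t \<in> LL \<Longrightarrow> c \<in> CC \<Longrightarrow> pl t c \<in> LL"
proof -
  assume t: "t \<in> LL" and c: "c \<in> CC"
  have A: "t \<in> A" "c \<in> A" using L_sub C_sub t c by auto
  have "pl t c \<noteq> z"
  proof
    assume "pl t c = z" hence "ng c = t" using ng_eq_iff A by simp
    thus False using ngC[OF c] LC_disj t by auto
  qed
  moreover have "pl t c \<noteq> c" using A z_notL t by auto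
  moreover have "pl t c \<noteq> ng c"
  proof
    assume e: "pl t c = ng c"
    have "t = pl (pl t c) (ng c)" using A by (simp add: G.m_assoc)
    also have "\<dots> = c" using e ngng_C c by simp
    finally show False using t c LC_disj by simp
  qed
  ultimately show ?thesis using A_cases[of "pl t c"] A C_eq[OF c] by auto
qed

lemma sum_CL: "c \<in> CC \<Longrightarrow> t \<in> LL \<Longrightarrow> pl c t \<in> LL"
proof -
  assume t: "t \<in> LL" and c: "c \<in> CC"
  have A: "t \<in> A" "c \<in> A" using L_sub C_sub t c by auto
  have "pl c t \<noteq> z"
  proof
    assume "pl c t = z" hence "ng t = c" using ng_eq_iff A by simp
    thus False using ngL[OF t] LC_disj c by auto
  qed
  moreover have "pl c t \<noteq> c" using A z_notL t by auto
  moreover have "pl c t \<noteq> ng c"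
  proof
    assume e: "pl c t = ng c"
    have "t = pl (ng c) (pl c t)" using A by (simp add: G.m_assoc[symmetric])
    also have "\<dots> = c" using e ngng_C c by simp
    finally show False using t c LC_disj by simp
  qed
  ultimately show ?thesis using A_cases[of "pl c t"] A C_eq[OF c] by auto
qed

lemma L_eq: "t \<in> LL \<Longrightarrow> c \<in> CC \<Longrightarrow> LL = {t, pl t c, pl t (ng c)}"
proof -
  assume t: "t \<in> LL" and c: "c \<in> CC"
  have A: "t \<in> A" "c \<in> A" using L_sub C_sub t c by auto
  have sub: "{t, pl t c, pl t (ng c)} \<subseteq> LL" using t c sum_LC ngC by auto
  have d1: "pl t c \<noteq> t" using A z_notC c by auto
  have d2: "pl t (ng c) \<noteq> t" using A z_notC ngC[OF c] by auto
  have d3: "pl t c \<noteq> pl t (ng c)" using A C_ng[OF c] by auto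
  have "card {t, pl t c, pl t (ng c)} = 3" using d1 d2 d3 by auto
  thus ?thesis using sub cardL card_subset_eq[OF finite_subset[OF LsubA fin] sub] by simp
qed

lemma comm_CL: "c \<in> CC \<Longrightarrow> t \<in> LL \<Longrightarrow> pl c t = pl t (ng c)"
proof -
  assume c: "c \<in> CC" and t: "t \<in> LL"
  have A: "t \<in> A" "c \<in> A" using L_sub C_sub t c by auto
  have "pl c t \<in> {t, pl t c, pl t (ng c)}" using sum_CL[OF c t] L_eq[OF t c] by simp
  moreover have "pl c t \<noteq> t" using A z_notC c by auto
  moreover have "pl c t \<noteq> pl t c"
  proof
    assume e: "pl c t = pl t c"
    have "pl (pl t c) (pl t c) = pl t (pl (pl c t) c)" using A by (simp add: G.m_assoc)
    also have "\<dots> = pl (pl t t) (pl c c)" using A e by (simp add: G.m_assoc)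
    also have "\<dots> = ng c" using L_inv[OF t] C_double[OF c] A by simp
    finally have "pl (pl t c) (pl t c) = ng c" .
    moreover have "pl (pl t c) (pl t c) = z" using L_inv sum_LC[OF t c] by simp
    ultimately show False using C_ng[OF c] A by (metis G.inv_one ngC c z_notC)
  qed
  ultimately show ?thesis by auto
qed

lemma comm_CL': "c \<in> CC \<Longrightarrow> t \<in> LL \<Longrightarrow> pl (ng c) t = pl t c"
  using comm_CL[of "ng c" t] ngC C_sub by simp

lemma ci_cancel: "a \<in> A \<Longrightarrow> x \<in> A \<Longrightarrow> y \<in> A \<Longrightarrow> ci a x = ci a y \<Longrightarrow> x = y"
  using H.Units_l_cancel[of a x y] H.Units_eq carr by simp

lemma ci_r_one: "a \<in> A \<Longrightarrow> x \<in> A \<Longrightarrow> ci a x = x \<Longrightarrow> a = z"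
  using H.r_cancel_one[of x a] carr one_eq by simp

lemma ci_l_one: "a \<in> A \<Longrightarrow> x \<in> A \<Longrightarrow> ci a x = a \<Longrightarrow> x = z"
  using H.l_cancel_one[of a x] carr one_eq by simp

lemma lm_CC_self: "e \<in> CC \<Longrightarrow> lm e e = e"
proof -
  assume e: "e \<in> CC"
  have eA: "e \<in> A" "ng e \<in> A" using C_sub e by auto
  have "lm e (ng e) \<in> {e, ng e}" using lmC[OF ngC[OF e] eA(1)] C_eq[OF e] by simp
  hence "ci e (ng e) \<in> {pl e e, pl e (ng e)}" using ci_eq[OF eA] by auto
  hence "ci e (ng e) \<in> {ng e, z}" using C_double[OF e] eA by simp
  moreover have "ci e (ng e) \<noteq> ng e"
  proof
    assume "ci e (ng e) = ng e" hence "e = z" using ci_r_one eA by blast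
    thus False using e z_notC by simp
  qed
  ultimately have ez: "ci e (ng e) = z" by simp
  have "lm e e \<noteq> ng e"
  proof
    assume "lm e e = ng e"
    hence "ci e e = z" using ci_eq[OF eA(1) eA(1)] eA by simp
    hence "e = ng e" using ci_cancel[OF eA(1) eA(1) eA(2)] ez by simp
    thus False using C_ng[OF e] by simp
  qed
  moreover have "lm e e \<in> {e, ng e}" using lmC[OF e eA(1)] C_eq[OF e] by simp
  ultimately show ?thesis by simp
qed

lemma ci_CC_self: "e \<in> CC \<Longrightarrow> ci e e = ng e"
  using ci_eq[of e e] lm_CC_self[of e] C_double[of e] C_sub[of e] by simp

lemma lm_ngC: "c \<in> CC \<Longrightarrow> lm (ng c) c = c"
proof -
  assume c: "c \<in> CC"
  have cA: "c \<in> A" using C_sub c by simp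
  have "ng c = lm (ng c) (ng c)" using lm_CC_self[OF ngC[OF c]] by simp
  also have "\<dots> = ng (lm (ng c) c)" using cA by (simp add: lm_ng)
  finally have "ng (ng c) = ng (ng (lm (ng c) c))" by simp
  thus ?thesis using cA by simp
qed

lemma stab_C: "c \<in> CC \<Longrightarrow> {g \<in> A. lm g c = c} = {z, c, ng c}"
proof -
  assume c: "c \<in> CC"
  have cA: "c \<in> A" using C_sub c by simp
  have sub: "{z, c, ng c} \<subseteq> {g \<in> A. lm g c = c}"
    using cA lm_CC_self[OF c] lm_ngC[OF c] by auto
  have d: "z \<noteq> c" "z \<noteq> ng c" "c \<noteq> ng c" using z_notC c ngC[OF c] C_ng[OF c] by metis+
  have "card {z, c, ng c} = 3" using d by simp
  moreover have "finite {g \<in> A. lm g c = c}" using fin by simp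
  ultimately show ?thesis using card_subset_eq sub stabC[OF c] by metis
qed

lemma lm_LC: "a \<in> LL \<Longrightarrow> c \<in> CC \<Longrightarrow> lm a c = ng c"
proof -
  assume a: "a \<in> LL" and c: "c \<in> CC"
  have aA: "a \<in> A" using L_sub a by simp
  have "a \<notin> {z, c, ng c}" using a z_notL LC_disj c ngC by auto
  hence "lm a c \<noteq> c" using stab_C[OF c] aA by blast
  moreover have "lm a c \<in> {c, ng c}" using lmC[OF c aA] C_eq[OF c] by simp
  ultimately show ?thesis by simp
qed

lemma stab_L_small: "t \<in> LL \<Longrightarrow> e \<in> CC \<Longrightarrow> lm e t = t \<Longrightarrow> False"
proof -
  assume t: "t \<in> LL" and e: "e \<in> CC" and f: "lm e t = t"
  have A: "t \<in> A" "e \<in> A" using L_sub C_sub t e by auto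
  have "lm (ng e) t = lm (ci e e) t" using ci_CC_self[OF e] by simp
  also have "\<dots> = t" using A f by (simp add: lm_comp)
  finally have sub: "{z, e, ng e} \<subseteq> {g \<in> A. lm g t = t}" using A f by auto
  have d: "z \<noteq> e" "z \<noteq> ng e" "e \<noteq> ng e" using z_notC e ngC[OF e] C_ng[OF e] by metis+
  have c3: "card {z, e, ng e} = 3" using d by simp
  have "finite {g \<in> A. lm g t = t}" using fin by simp
  hence "card {z, e, ng e} \<le> card {g \<in> A. lm g t = t}" using sub by (rule card_mono)
  thus False using c3 stabL[OF t] by simp
qed

lemma C_ex: "\<exists>c. c \<in> CC" using cardC by (metis card.empty ex_in_conv zero_neq_numeral)

lemma lm_LL_self: "a \<in> LL \<Longrightarrow> lm a a = a"
proof (rule ccontr)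
  assume a: "a \<in> LL" and ne: "lm a a \<noteq> a"
  obtain c where c: "c \<in> CC" using C_ex by auto
  have aA: "a \<in> A" using L_sub a by simp
  define b where "b = lm a a"
  have "b \<in> {a, pl a c, pl a (ng c)}" using lmL[OF a aA] L_eq[OF a c] b_def by simp
  then obtain e where e: "e \<in> CC" "b = pl a e" using ne b_def c ngC[OF c] by auto
  have eA: "e \<in> A" using C_sub e by simp
  have "ci a a = pl a (pl a e)" using ci_eq[OF aA aA] b_def e by simp
  also have "\<dots> = e" using L_inv[OF a] aA eA by (simp add: G.m_assoc[symmetric])
  finally have cia: "ci a a = e" .
  have "lm a b = pl (lm a a) (lm a e)" using e aA eA by (simp add: lm_hom)
  also have "\<dots> = pl (pl a e) (ng e)" using b_def e lm_LC[OF a e(1)] by simp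
  also have "\<dots> = a" using aA eA by (simp add: G.m_assoc)
  finally have lab: "lm a b = a" .
  have "lm e a = lm (ci a a) a" using cia by simp
  also have "\<dots> = a" using aA lab b_def by (simp add: lm_comp)
  finally show False using stab_L_small[OF a e(1)] by simp
qed

lemma lm_CL: "e \<in> CC \<Longrightarrow> t \<in> LL \<Longrightarrow> lm e t = pl t (ng e)"
proof -
  assume e: "e \<in> CC" and t: "t \<in> LL"
  have A: "t \<in> A" "e \<in> A" using L_sub C_sub t e by auto
  have "lm e t \<in> {t, pl t e, pl t (ng e)}" using lmL[OF t A(2)] L_eq[OF t e] by simp
  moreover have "lm e t \<noteq> t" using stab_L_small[OF t e] by auto
  moreover have "lm e t \<noteq> pl t e"
  proof
    assume h: "lm e t = pl t e"
    have "ci e t = pl e (pl t e)" using ci_eq[OF A(2) A(1)] h by simp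
    also have "\<dots> = pl (pl e t) e" using A by (simp add: G.m_assoc)
    also have "\<dots> = pl (pl t (ng e)) e" using comm_CL[OF e t] by simp
    also have "\<dots> = t" using A by (simp add: G.m_assoc)
    finally have cet: "ci e t = t" .
    have "t = lm t t" using lm_LL_self[OF t] by simp
    also have "\<dots> = lm (ci e t) t" using cet by simp
    also have "\<dots> = lm e t" using A lm_LL_self[OF t] by (simp add: lm_comp)
    finally show False using stab_L_small[OF t e] by simp
  qed
  ultimately show ?thesis by auto
qed

lemma lm_formula: "a \<in> A \<Longrightarrow> b \<in> A \<Longrightarrow> lm a b = pl (pl (ng a) b) a"
proof -
  assume aA: "a \<in> A" and bA: "b \<in> A"
  consider "a = z" | "a \<in> LL" | "a \<in> CC" using A_cases[OF aA] by auto
  thus ?thesis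
  proof cases
    case 1 thus ?thesis using bA by simp
  next
    case 2
    hence na: "ng a = a" by (rule L_ng)
    consider "b = z" | "b \<in> CC" | "b \<in> LL" using A_cases[OF bA] by auto
    thus ?thesis
    proof cases
      case 1 thus ?thesis using aA by simp
    next
      case 3
      obtain c where c: "c \<in> CC" using C_ex by auto
      have "b \<in> {a, pl a c, pl a (ng c)}" using L_eq[OF 2 c] 3 by simp
      then consider "b = a" | e where "e \<in> CC" "b = pl a e" using c ngC[OF c] by auto
      thus ?thesis
      proof cases
        case 1 thus ?thesis using lm_LL_self[OF 2] L_inv[OF 2] aA na by (simp add: G.m_assoc)
      next
        case (2 e)
        have eA: "e \<in> A" using C_sub 2 by simp
        have "lm a b = pl (lm a a) (lm a e)" using 2 aA eA by (simp add: lm_hom)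
        also have "\<dots> = pl a (ng e)" using lm_LL_self[OF \<open>a \<in> LL\<close>] lm_LC[OF \<open>a \<in> LL\<close> 2(1)] by simp
        also have "\<dots> = pl e a" using comm_CL[OF 2(1) \<open>a \<in> LL\<close>] by simp
        also have "\<dots> = pl (pl (ng a) b) a" using 2 aA eA by (simp add: G.m_assoc[symmetric])
        finally show ?thesis .
      qed
    next
      case 2
      have "lm a b = ng b" using lm_LC[OF \<open>a \<in> LL\<close> 2] .
      also have "\<dots> = pl a (pl a (ng b))" using L_inv[OF \<open>a \<in> LL\<close>] aA bA by (simp add: G.m_assoc[symmetric])
      also have "\<dots> = pl a (pl b a)" using comm_CL[OF 2 \<open>a \<in> LL\<close>] by simp
      also have "\<dots> = pl (pl (ng a) b) a" using na aA bA by (simp add: G.m_assoc)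
      finally show ?thesis .
    qed
  next
    case 3
    consider "b = z" | "b \<in> CC" | "b \<in> LL" using A_cases[OF bA] by auto
    thus ?thesis
    proof cases
      case 1 thus ?thesis using aA by simp
    next
      case 2
      hence "b = a \<or> b = ng a" using C_eq[OF 3] by simp
      thus ?thesis
      proof
        assume "b = a" thus ?thesis using lm_CC_self[OF 3] aA by (simp add: G.m_assoc)
      next
        assume "b = ng a"
        thus ?thesis using lm_CC_self[OF 3] aA lm_ng by (simp add: G.m_assoc)
      qed
    next
      case 4: 3
      have "lm a b = pl b (ng a)" using lm_CL[OF 3 4] .
      also have "\<dots> = pl b (pl a a)" using C_double[OF 3] by simp
      also have "\<dots> = pl (pl b a) a" using aA bA by (simp add: G.m_assoc)
      also have "\<dots> = pl (pl (ng a) b) a" using comm_CL'[OF 3 4] by simp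
      finally show ?thesis .
    qed
  qed
qed

lemma ci_comm: "a \<in> A \<Longrightarrow> b \<in> A \<Longrightarrow> ci a b = pl b a"
  using ci_eq[of a b] lm_formula[of a b] by (simp add: G.m_assoc[symmetric])

end



context SB2
begin

definition "t0 = (SOME t. t \<in> LL)"
definition "c0 = (SOME c. c \<in> CC)"

lemma t0: "t0 \<in> LL" unfolding t0_def using cardL
  by (metis card.empty ex_in_conv zero_neq_numeral someI_ex)
lemma c0: "c0 \<in> CC" unfolding c0_def using C_ex by (metis someI_ex)

definition "nu (i::nat) = (if i = 1 then t0 else if i = 2 then pl t0 c0 else pl t0 (ng c0))"
definition "idx = inv_into {1,2,3} nu"
definition "ff a = (\<lambda>i. if i \<in> {1,2,3} then idx (lm a (nu i)) else i)"

lemma nu_img: "nu ` {1,2,3} = LL"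
  using L_eq[OF t0 c0] by (auto simp: nu_def)

lemma nu_inj: "inj_on nu {1,2,3}"
proof -
  have A: "t0 \<in> A" "c0 \<in> A" using L_sub C_sub t0 c0 by auto
  have d1: "pl t0 c0 \<noteq> t0" using A z_notC c0 by auto
  have d2: "pl t0 (ng c0) \<noteq> t0" using A z_notC ngC[OF c0] by auto
  have d3: "pl t0 c0 \<noteq> pl t0 (ng c0)" using A C_ng[OF c0] by auto
  show ?thesis using d1 d2 d3 by (auto simp: inj_on_def nu_def)
qed

lemma nu_bij: "bij_betw nu {1,2,3} LL"
  using nu_inj nu_img by (simp add: bij_betw_def)

lemma idx_bij: "bij_betw idx LL {1,2,3}"
  unfolding idx_def using bij_betw_inv_into[OF nu_bij] .

lemma idx_in: "y \<in> LL \<Longrightarrow> idx y \<in> {1,2,3}"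
  using idx_bij bij_betwE by blast

lemma nu_idx: "y \<in> LL \<Longrightarrow> nu (idx y) = y"
  unfolding idx_def using nu_img f_inv_into_f by metis

lemma nu_in: "i \<in> {1,2,3} \<Longrightarrow> nu i \<in> LL"
  using nu_img by blast

lemma lm_bijL: "a \<in> A \<Longrightarrow> bij_betw (lm a) LL LL"
  by (rule bij_betwI[where g="lm (inv\<^bsub>H\<^esub> a)"])
     (auto simp: lmL lm_inv_left lm_inv_right L_sub)

lemma ff_bij: "a \<in> A \<Longrightarrow> bij_betw (ff a) {1,2,3} {1,2,3}"
proof -
  assume a: "a \<in> A"
  have "bij_betw (idx \<circ> (lm a \<circ> nu)) {1,2,3} {1,2,3}"
    using bij_betw_trans[OF bij_betw_trans[OF nu_bij lm_bijL[OF a]] idx_bij] by (simp add: comp_assoc)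
  moreover have "\<And>i. i \<in> {1,2,3} \<Longrightarrow> ff a i = (idx \<circ> (lm a \<circ> nu)) i" by (simp add: ff_def)
  ultimately show ?thesis using bij_betw_cong[of "{1,2,3}" "ff a" "idx \<circ> (lm a \<circ> nu)" "{1,2,3}"] by blast
qed

lemma set13: "{1..3::nat} = {1,2,3}" by auto

lemma ff_perm: "a \<in> A \<Longrightarrow> ff a \<in> carrier (sym_group 3)"
  unfolding sym_group_carrier set13
  by (rule bij_imp_permutes[OF ff_bij]) (auto simp: ff_def)

lemma ff_mult: "a \<in> A \<Longrightarrow> b \<in> A \<Longrightarrow> ff (ci a b) = ff a \<circ> ff b"
proof
  fix i assume a: "a \<in> A" "b \<in> A"
  show "ff (ci a b) i = (ff a \<circ> ff b) i"
  proof (cases "i \<in> {1,2,3}")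
    case True
    have nA: "nu i \<in> A" using nu_in[OF True] L_sub by blast
    have y: "lm b (nu i) \<in> LL" using lmL nu_in True a by blast
    have "ff (ci a b) i = idx (lm (ci a b) (nu i))" using True by (simp add: ff_def)
    also have "\<dots> = idx (lm a (lm b (nu i)))" using a nA by (simp add: lm_comp)
    also have "\<dots> = idx (lm a (nu (idx (lm b (nu i)))))" using nu_idx[OF y] by simp
    also have "\<dots> = ff a (idx (lm b (nu i)))" using idx_in[OF y] by (simp add: ff_def)
    also have "\<dots> = (ff a \<circ> ff b) i" using True by (simp add: ff_def)
    finally show ?thesis .
  qed (simp add: ff_def)
qed

lemma ff_inj: "inj_on ff A"
proof
  fix a b assume a: "a \<in> A" and b: "b \<in> A" and e: "ff a = ff b"
  have eq: "lm a y = lm b y" if y: "y \<in> LL" for y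
  proof -
    obtain i where i: "i \<in> {1,2,3}" "y = nu i" using y nu_img by blast
    have "idx (lm a y) = idx (lm b y)" using fun_cong[OF e, of i] i by (simp add: ff_def)
    hence "nu (idx (lm a y)) = nu (idx (lm b y))" by simp
    thus ?thesis using nu_idx lmL y a b by metis
  qed
  define k where "k = ci (inv\<^bsub>H\<^esub> a) b"
  have kA: "k \<in> A" using a b k_def by simp
  have kfix: "lm k y = y" if y: "y \<in> LL" for y
    using y a b eq[OF y, symmetric] by (simp add: k_def lm_comp L_sub lm_inv_left)
  have "k = z"
  proof (rule ccontr)
    assume "k \<noteq> z"
    hence "k \<in> LL \<or> k \<in> CC" using A_cases kA by auto
    thus False
    proof
      assume kL: "k \<in> LL"
      have cA: "c0 \<in> A" using C_sub c0 by simp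
      have "pl k c0 \<in> LL" using sum_LC[OF kL c0] .
      hence h1: "lm k (pl k c0) = pl k c0" by (rule kfix)
      have e1: "lm k (pl k c0) = pl (lm k k) (lm k c0)" by (rule lm_hom[OF kA kA cA])
      have e2: "pl (lm k k) (lm k c0) = pl k (ng c0)"
        by (simp only: lm_LL_self[OF kL] lm_LC[OF kL c0])
      have "pl k c0 = pl k (ng c0)" using h1 e1 e2 by argo
      hence "c0 = ng c0" using G.Units_l_cancel[of k c0 "ng c0"] G.Units_eq kA cA by simp
      thus False using C_ng[OF c0] by simp
    next
      assume "k \<in> CC"
      thus False using stab_L_small[OF t0 _ kfix[OF t0]] by simp
    qed
  qed
  hence "ci (inv\<^bsub>H\<^esub> a) b = \<one>\<^bsub>H\<^esub>" using k_def one_eq by simp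
  moreover have "(ci (inv\<^bsub>H\<^esub> a) b = \<one>\<^bsub>H\<^esub>) = (b = ci a \<one>\<^bsub>H\<^esub>)"
    using H.inv_solve_left'[of "\<one>\<^bsub>H\<^esub>" a b] a b carr H.one_closed by simp
  ultimately show "a = b" using a carr by simp
qed

lemma card_sym3: "card (carrier (sym_group 3)) = 6"
proof -
  have "card {p. p permutes {1..3::nat}} = fact 3" by (rule card_permutations) auto
  thus ?thesis by (simp add: sym_group_def fact_numeral)
qed

lemma ff_bij_all: "bij_betw ff A (carrier (sym_group 3))"
proof -
  have sub: "ff ` A \<subseteq> carrier (sym_group 3)" using ff_perm by auto
  have "card (ff ` A) = 6" using card_image[OF ff_inj] cardA by simp
  moreover have "finite (carrier (sym_group 3))"
    by (simp add: sym_group_def finite_permutations)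
  ultimately have "ff ` A = carrier (sym_group 3)" using card_subset_eq sub card_sym3 by metis
  thus ?thesis using ff_inj by (simp add: bij_betw_def)
qed

lemma iso: "skew_brace_iso G H S3_add S3_circ ff"
  unfolding skew_brace_iso_def
proof (intro conjI ballI)
  show "bij_betw ff A (carrier S3_add)" using ff_bij_all by (simp add: S3_add_def)
next
  fix a b assume a: "a \<in> A" "b \<in> A"
  show "ff (ci a b) = ff a \<otimes>\<^bsub>S3_circ\<^esub> ff b" using ff_mult a by (simp add: S3_circ_def sym_group_mult)
  have "ff (pl a b) = ff (ci b a)" using ci_comm[of b a] a by simp
  also have "\<dots> = ff b \<circ> ff a" using ff_mult a by simp
  finally show "ff (pl a b) = ff a \<otimes>\<^bsub>S3_add\<^esub> ff b" by (simp add: S3_add_def sym_group_mult)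
qed

end

theorem mainTheorem10:
  fixes G H :: "'a monoid"
  assumes "skew_brace G H"
    and "finite (carrier G)"
    and "\<exists>L1 L2. Lambda_vertices G H = {L1, L2} \<and> L1 \<noteq> L2 \<and> \<not> Lambda_adj L1 L2"
  shows "\<exists>f. skew_brace_iso G H S3_add S3_circ f"
proof -
  obtain L1 L2 where L: "Lambda_vertices G H = {L1, L2}" "L1 \<noteq> L2" "\<not> Lambda_adj L1 L2"
    using assms(3) by blast
  have sb: "group G" "group H" "carrier H = carrier G"
    "\<And>a b c. a \<in> carrier G \<Longrightarrow> b \<in> carrier G \<Longrightarrow> c \<in> carrier G \<Longrightarrow>
        a \<otimes>\<^bsub>H\<^esub> (b \<otimes>\<^bsub>G\<^esub> c) =
        ((a \<otimes>\<^bsub>H\<^esub> b) \<otimes>\<^bsub>G\<^esub> inv\<^bsub>G\<^esub> a) \<otimes>\<^bsub>G\<^esub> (a \<otimes>\<^bsub>H\<^esub> c)"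
    using assms(1) unfolding skew_brace_def by auto
  have SBa: "SB G H" using SB.intro[OF sb(1) sb(2) SB_axioms.intro[OF sb(3) sb(4)]] .
  interpret SB2 G H L1 L2 using SB2.intro[OF SBa SB2_axioms.intro[OF assms(2) L(1) L(2) L(3)]] .
  show ?thesis using iso by blast
qed


end
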